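(* Let $T$ be a text of length $n$ with suffix tree $\mathcal T$, and let $d=\lceil\log_2 n\rceil$. The total number of unique Weiner links in $\mathcal T$ is $O(n/d)$.
   Context: For a node $v$ of the suffix tree $\mathcal T$ whose root-to-node path spells $p$, and a symbol $c$ such that $cp$ occurs in $T$, the Weiner link $\mathrm{wlink}(v,c)$ goes from $v$ (its source) to the locus $u$ of $cp$ in $\mathcal T$. A Weiner link is heavy if its target node has at least $d$ leaf descendants, and light otherwise. A Weiner link $\mathrm{wlink}(v,c)$ is unique if $v$ is the source of at least $d+1$ Weiner links and $\mathrm{wlink}(v,c)$ is the only heavy Weiner link with source $v$. *)

theory Defs
  imports Complex_Main "HOL-Library.Sublist"
begin

text \<open>Nodes of the
(compacted) suffix tree of T are identified with the strings spelled on their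
root-to-node paths: the root (empty string), the branching nodes
(right-maximal substrings), and the leaves (nonempty suffixes of T that cannot
be extended to the right inside T).  When T ends with a unique terminator the
leaves are exactly the nonempty suffixes of T.\<close>

definition st_leaves :: "'a list \<Rightarrow> 'a list set" where
  "st_leaves T = {p. suffix p T \<and> p \<noteq> [] \<and> \<not> (\<exists>a. sublist (p @ [a]) T)}"

definition st_nodes :: "'a list \<Rightarrow> 'a list set" where
  "st_nodes T = {[]}
     \<union> {p. \<exists>a b. a \<noteq> b \<and> sublist (p @ [a]) T \<and> sublist (p @ [b]) T}
     \<union> st_leaves T"

definition locus :: "'a list \<Rightarrow> 'a list \<Rightarrow> 'a list" where
  "locus T q = (ARG_MIN length u. u \<in> st_nodes T \<and> prefix q u)"

definition leaf_desc :: "'a list \<Rightarrow> 'a list \<Rightarrow> nat" where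
  "leaf_desc T u = card {w \<in> st_leaves T. prefix u w}"

definition wlinks :: "'a list \<Rightarrow> 'a list \<Rightarrow> 'a set" where
  "wlinks T p = {c. sublist (c # p) T}"

definition heavy_wlink :: "'a list \<Rightarrow> nat \<Rightarrow> 'a list \<Rightarrow> 'a \<Rightarrow> bool" where
  "heavy_wlink T d p c \<longleftrightarrow> leaf_desc T (locus T (c # p)) \<ge> d"

definition unique_wlink :: "'a list \<Rightarrow> nat \<Rightarrow> 'a list \<Rightarrow> 'a \<Rightarrow> bool" where
  "unique_wlink T d p c \<longleftrightarrow>
     p \<in> st_nodes T \<and> c \<in> wlinks T p \<and> card (wlinks T p) \<ge> d + 1 \<and>
     heavy_wlink T d p c \<and> (\<forall>c' \<in> wlinks T p. heavy_wlink T d p c' \<longrightarrow> c' = c)"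

definition num_unique_wlinks :: "'a list \<Rightarrow> nat \<Rightarrow> nat" where
  "num_unique_wlinks T d = card {(p, c). unique_wlink T d p c}"

end

theory Submission
  imports Defs
begin

definition subs :: "'a list \<Rightarrow> nat \<Rightarrow> 'a list set" where
  "subs T l = {q. length q = l \<and> sublist q T}"

definition bigS :: "'a list \<Rightarrow> nat \<Rightarrow> 'a list set" where
  "bigS T d = {p. sublist p T \<and> d + 1 \<le> card (wlinks T p)}"

lemma fin_sublists: "finite {q. sublist q T}"
  unfolding set_sublists_eq[symmetric] by (rule List.finite_set)

lemma fin_subs: "finite (subs T l)"
  by (rule finite_subset[OF _ fin_sublists[of T]]) (auto simp: subs_def)

lemma fin_bigS: "finite (bigS T d)"
  by (rule finite_subset[OF _ fin_sublists[of T]]) (auto simp: bigS_def)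

lemma sublist_ConsD: "sublist (c # p) T \<Longrightarrow> sublist p T"
  by (metis sublist_Cons_right sublist_order.dual_order.trans sublist_order.order_refl)

lemma fin_wlinks: "finite (wlinks T p)"
  by (rule finite_subset[of _ "set T"]) (auto simp: wlinks_def dest: set_mono_sublist)

lemma subs_Suc: "subs T (Suc l) = (\<Union>p\<in>subs T l. (\<lambda>c. c # p) ` wlinks T p)"
proof (intro equalityI subsetI)
  fix q assume "q \<in> subs T (Suc l)"
  then obtain c p where q: "q = c # p" "length p = l" "sublist (c#p) T"
    unfolding subs_def by (cases q) auto
  then have "p \<in> subs T l" "c \<in> wlinks T p" by (auto simp: subs_def wlinks_def dest: sublist_ConsD)
  then show "q \<in> (\<Union>p\<in>subs T l. (\<lambda>c. c # p) ` wlinks T p)" using q(1) by blast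
qed (auto simp: subs_def wlinks_def)

lemma card_subs_Suc: "card (subs T (Suc l)) = (\<Sum>p\<in>subs T l. card (wlinks T p))"
proof -
  have "card (subs T (Suc l)) = (\<Sum>p\<in>subs T l. card ((\<lambda>c. c # p) ` wlinks T p))"
    unfolding subs_Suc
    by (rule card_UN_disjoint) (auto simp: fin_subs fin_wlinks)
  also have "\<dots> = (\<Sum>p\<in>subs T l. card (wlinks T p))"
    by (rule sum.cong) (auto intro: card_image inj_onI)
  finally show ?thesis .
qed

lemma empty_wlinks_prefix:
  assumes "sublist p T" "wlinks T p = {}"
  shows "p = take (length p) T"
proof -
  obtain xs ys where T: "T = xs @ p @ ys" using assms(1) unfolding sublist_def by blast
  show ?thesis
  proof (cases xs rule: rev_cases)
    case Nil then show ?thesis using T by simp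
  next
    case (snoc xs' a)
    then have "sublist (a # p) T" using T
      by (metis append_Cons append_assoc append_Nil sublist_appendI)
    then show ?thesis using assms(2) by (auto simp: wlinks_def)
  qed
qed

lemma step_ineq:
  "card (subs T l) + d * card (bigS T d \<inter> subs T l) \<le> card (subs T (Suc l)) + 1"
proof -
  let ?A = "subs T l"
  let ?E = "{p \<in> ?A. wlinks T p = {}}"
  have fA: "finite ?A" by (rule fin_subs)
  have E1: "card ?E \<le> 1"
  proof -
    have "?E \<subseteq> {take l T}" using empty_wlinks_prefix by (fastforce simp: subs_def)
    then have "card ?E \<le> card {take l T}" by (intro card_mono) auto
    then show ?thesis by simp
  qed
  have pt: "1 + (if p \<in> bigS T d then d else 0) \<le> card (wlinks T p) + (if wlinks T p = {} then 1 else 0)"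
    if "p \<in> ?A" for p
  proof (cases "p \<in> bigS T d")
    case True then show ?thesis by (auto simp: bigS_def)
  next
    case False
    then show ?thesis using fin_wlinks[of T p] by (auto simp: Suc_le_eq card_gt_0_iff)
  qed
  have "(\<Sum>p\<in>?A. 1 + (if p \<in> bigS T d then d else 0))
      \<le> (\<Sum>p\<in>?A. card (wlinks T p) + (if wlinks T p = {} then 1 else 0))"
    by (rule sum_mono) (rule pt)
  moreover have "(\<Sum>p\<in>?A. 1 + (if p \<in> bigS T d then d else 0)) = card ?A + d * card (bigS T d \<inter> ?A)"
  proof -
    have "(\<Sum>p\<in>?A. (if p \<in> bigS T d then d else 0)) = (\<Sum>p\<in>{p\<in>?A. p \<in> bigS T d}. d)"
      using sum.inter_filter[OF fA, of "\<lambda>_. d" "\<lambda>p. p \<in> bigS T d"] by simp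
    also have "\<dots> = d * card (bigS T d \<inter> ?A)"
    proof -
      have "{p\<in>?A. p \<in> bigS T d} = bigS T d \<inter> ?A" by blast
      then show ?thesis by simp
    qed
    finally show ?thesis by (simp only: sum.distrib) simp
  qed
  moreover have "(\<Sum>p\<in>?A. card (wlinks T p) + (if wlinks T p = {} then 1 else 0)) = card (subs T (Suc l)) + card ?E"
  proof -
    have "(\<Sum>p\<in>?A. (if wlinks T p = {} then 1 else 0)) = (\<Sum>p\<in>?E. 1::nat)"
      using sum.inter_filter[OF fA, of "\<lambda>_. 1::nat" "\<lambda>p. wlinks T p = {}"] by simp
    then show ?thesis by (simp add: sum.distrib card_subs_Suc)
  qed
  ultimately show ?thesis using E1 by linarith
qed

lemma subs0: "subs T 0 = {[]}"
  by (auto simp: subs_def)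

lemma telescope_gen:
  fixes L S :: "nat \<Rightarrow> nat"
  assumes step: "\<And>l. L l + d * S l \<le> L (Suc l) + 1" and "L 0 = 1"
  shows "d * (\<Sum>l<m. S l) + 1 \<le> L m + m"
proof (induction m)
  case 0 then show ?case using assms(2) by simp
next
  case (Suc m)
  have "d * (\<Sum>l<Suc m. S l) + 1 = d * (\<Sum>l<m. S l) + 1 + d * S m" by (simp add: algebra_simps)
  also have "\<dots> \<le> L m + m + d * S m" using Suc by simp
  also have "\<dots> \<le> L (Suc m) + Suc m" using step[of m] by simp
  finally show ?case .
qed

lemma telescope: "d * (\<Sum>l<m. card (bigS T d \<inter> subs T l)) + 1 \<le> card (subs T m) + m"
  by (rule telescope_gen[where L="\<lambda>l. card (subs T l)" and S="\<lambda>l. card (bigS T d \<inter> subs T l)"])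
     (rule step_ineq, simp add: subs0)

lemma bigS_bound: "d * card (bigS T d) \<le> length T"
proof -
  let ?n = "length T"
  have e: "subs T (Suc ?n) = {}" by (auto simp: subs_def dest: sublist_length_le)
  have "bigS T d = (\<Union>l<Suc ?n. bigS T d \<inter> subs T l)"
    by (auto simp: bigS_def subs_def Nat.less_Suc_eq_le dest: sublist_length_le)
  then have "card (bigS T d) \<le> (\<Sum>l<Suc ?n. card (bigS T d \<inter> subs T l))"
    by (metis card_UN_le finite_lessThan)
  then have "d * card (bigS T d) \<le> d * (\<Sum>l<Suc ?n. card (bigS T d \<inter> subs T l))" by simp
  also have "\<dots> \<le> ?n" using telescope[where d=d and m="Suc ?n" and T=T] e by simp
  finally show ?thesis .
qed

lemma unique_bound: "num_unique_wlinks T d \<le> card (bigS T d)"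
  unfolding num_unique_wlinks_def
proof (rule card_inj_on_le[where f = fst])
  show "inj_on fst {(p, c). unique_wlink T d p c}"
  proof (rule inj_onI)
    fix x y assume x: "x \<in> {(p, c). unique_wlink T d p c}" and y: "y \<in> {(p, c). unique_wlink T d p c}"
      and e: "fst x = fst y"
    obtain p c where xp: "x = (p, c)" by (cases x)
    obtain p' c' where yp: "y = (p', c')" by (cases y)
    have u1: "unique_wlink T d p c" using x xp by simp
    have u2: "unique_wlink T d p c'" using y yp e xp by simp
    have "c' \<in> wlinks T p" "heavy_wlink T d p c'" using u2 unfolding unique_wlink_def by blast+
    then have "c' = c" using u1 unfolding unique_wlink_def by blast
    then show "x = y" using xp yp e by simp
  qed
  show "fst ` {(p, c). unique_wlink T d p c} \<subseteq> bigS T d"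
  proof
    fix p assume "p \<in> fst ` {(p, c). unique_wlink T d p c}"
    then obtain c where u: "unique_wlink T d p c" by force
    then have "c \<in> wlinks T p" "d + 1 \<le> card (wlinks T p)" unfolding unique_wlink_def by blast+
    then show "p \<in> bigS T d" unfolding bigS_def wlinks_def by (auto dest: sublist_ConsD)
  qed
  show "finite (bigS T d)" by (rule fin_bigS)
qed

theorem proposition5:
  "\<exists>C N. \<forall>T :: nat list. length T \<ge> N \<longrightarrow>
     real (num_unique_wlinks T (nat \<lceil>log 2 (real (length T))\<rceil>))
       \<le> C * real (length T) / real (nat \<lceil>log 2 (real (length T))\<rceil>)"
proof (intro exI allI impI)
  fix T :: "nat list"
  assume n2: "length T \<ge> 2"
  define d where "d = nat \<lceil>log 2 (real (length T))\<rceil>"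
  have "log 2 2 \<le> log 2 (real (length T))" using n2 by (subst log_le_cancel_iff) auto
  then have "log 2 (real (length T)) \<ge> 1" by simp
  then have dpos: "d \<ge> 1" unfolding d_def by linarith
  have "d * num_unique_wlinks T d \<le> length T"
    using bigS_bound[of d T] unique_bound[of T d] by (meson le_trans mult_le_mono2)
  then have "real d * real (num_unique_wlinks T d) \<le> real (length T)"
    by (metis of_nat_le_iff of_nat_mult)
  then have "real (num_unique_wlinks T d) \<le> 1 * real (length T) / real d"
    using dpos by (simp add: field_simps)
  then show "real (num_unique_wlinks T (nat \<lceil>log 2 (real (length T))\<rceil>))
       \<le> 1 * real (length T) / real (nat \<lceil>log 2 (real (length T))\<rceil>)"
    unfolding d_def .
qed

end
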